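(* Let $(A,\wedge,\vee,0,1)$ be a bounded distributive lattice and $\to$ a binary operation on $A$. Then $(A,\wedge,\vee,\to,0,1)$ is a weak Heyting algebra if and only if $(A,\wedge,\vee,\wedge,\to,1)$ (with the meet also used as the monoidal operation) is a $\mathsf{DLCMI}$. Consequently the variety of weak Heyting algebras can be identified with the subvariety of $\mathsf{DLCMI}$ defined by the equation $x\wedge y\approx x\cdot y$.
   Context: A weak Heyting algebra is an algebra $(A,\wedge,\vee,\to,0,1)$ such that $(A,\wedge,\vee,0,1)$ is a bounded distributive lattice and for all $a,b,c$: $(a\to b)\wedge(a\to c)=a\to(b\wedge c)$; $(a\to c)\wedge(b\to c)=(a\vee b)\to c$; $(a\to b)\wedge(b\to c)\le a\to c$; $a\to a=1$. An algebra $(A,\wedge,\vee,\cdot,\to,1)$ of type $(2,2,2,2,0)$ is a $\mathsf{DLCMI}$ if for all $a,b,c\in A$: (1) $(A,\wedge,\vee)$ is a distributive lattice; (2) $1$ is its largest element; (3) $(A,\cdot,1)$ is a commutative monoid; (4) $(a\to b)\wedge(a\to c)=a\to(b\wedge c)$; (5) $(a\to c)\wedge(b\to c)=(a\vee b)\to c$; (6) $a\to a=1$; (7) $(a\vee b)\cdot c=(a\cdot c)\vee(b\cdot c)$; (8) $(a\to b)\cdot(b\to c)\le a\to c$; (9) $a\to b\le (a\cdot c)\to(b\cdot c)$. *)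

theory Defs
  imports Main
begin

text \<open>Algebras are given by explicit operations on a type (the whole type is the carrier).
  The lattice order is the one induced by the meet: a \<le> b iff a \<and> b = a.\<close>

definition distrib_lattice_ops :: "('a \<Rightarrow> 'a \<Rightarrow> 'a) \<Rightarrow> ('a \<Rightarrow> 'a \<Rightarrow> 'a) \<Rightarrow> bool" where
  "distrib_lattice_ops mt jn \<longleftrightarrow>
     (\<forall>a b. mt a b = mt b a) \<and> (\<forall>a b. jn a b = jn b a) \<and>
     (\<forall>a b c. mt (mt a b) c = mt a (mt b c)) \<and> (\<forall>a b c. jn (jn a b) c = jn a (jn b c)) \<and>
     (\<forall>a b. mt a (jn a b) = a) \<and> (\<forall>a b. jn a (mt a b) = a) \<and>
     (\<forall>a b c. mt a (jn b c) = jn (mt a b) (mt a c))"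

definition lat_le :: "('a \<Rightarrow> 'a \<Rightarrow> 'a) \<Rightarrow> 'a \<Rightarrow> 'a \<Rightarrow> bool" where
  "lat_le mt a b \<longleftrightarrow> mt a b = a"

definition weak_heyting_algebra ::
  "('a \<Rightarrow> 'a \<Rightarrow> 'a) \<Rightarrow> ('a \<Rightarrow> 'a \<Rightarrow> 'a) \<Rightarrow> ('a \<Rightarrow> 'a \<Rightarrow> 'a) \<Rightarrow> 'a \<Rightarrow> 'a \<Rightarrow> bool" where
  "weak_heyting_algebra mt jn imp zero one \<longleftrightarrow>
     distrib_lattice_ops mt jn \<and>
     (\<forall>a. lat_le mt zero a) \<and> (\<forall>a. lat_le mt a one) \<and>
     (\<forall>a b c. mt (imp a b) (imp a c) = imp a (mt b c)) \<and>
     (\<forall>a b c. mt (imp a c) (imp b c) = imp (jn a b) c) \<and>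
     (\<forall>a b c. lat_le mt (mt (imp a b) (imp b c)) (imp a c)) \<and>
     (\<forall>a. imp a a = one)"

definition dlcmi ::
  "('a \<Rightarrow> 'a \<Rightarrow> 'a) \<Rightarrow> ('a \<Rightarrow> 'a \<Rightarrow> 'a) \<Rightarrow> ('a \<Rightarrow> 'a \<Rightarrow> 'a) \<Rightarrow> ('a \<Rightarrow> 'a \<Rightarrow> 'a) \<Rightarrow> 'a \<Rightarrow> bool" where
  "dlcmi mt jn dot imp one \<longleftrightarrow>
     distrib_lattice_ops mt jn \<and>
     (\<forall>a. lat_le mt a one) \<and>
     (\<forall>a b c. dot (dot a b) c = dot a (dot b c)) \<and> (\<forall>a b. dot a b = dot b a) \<and>
     (\<forall>a. dot a one = a) \<and>
     (\<forall>a b c. mt (imp a b) (imp a c) = imp a (mt b c)) \<and>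
     (\<forall>a b c. mt (imp a c) (imp b c) = imp (jn a b) c) \<and>
     (\<forall>a. imp a a = one) \<and>
     (\<forall>a b c. dot (jn a b) c = jn (dot a c) (dot b c)) \<and>
     (\<forall>a b c. lat_le mt (dot (imp a b) (imp b c)) (imp a c)) \<and>
     (\<forall>a b c. lat_le mt (imp a b) (imp (dot a c) (dot b c)))"

end

theory Submission
  imports Defs
begin

lemma dl_ok: "distrib_lattice_ops (inf::'a::distrib_lattice \<Rightarrow> _) sup"
  unfolding distrib_lattice_ops_def
  apply (intro conjI allI)
  apply (rule inf_commute)
  apply (rule sup_commute)
  apply (rule inf_assoc)
  apply (rule sup_assoc)
  apply simp
  apply simp
  apply (rule inf_sup_distrib1)
  done

theorem lemma2p5:
  fixes imp :: "'a::{distrib_lattice, bounded_lattice} \<Rightarrow> 'a \<Rightarrow> 'a"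
  shows "weak_heyting_algebra inf sup imp bot top \<longleftrightarrow> dlcmi inf sup inf imp top"
proof
  assume W: "weak_heyting_algebra inf sup imp bot top"
  hence A4: "\<And>a b c. inf (imp a b) (imp a c) = imp a (inf b c)"
    and A5: "\<And>a b c. inf (imp a c) (imp b c) = imp (sup a b) c"
    and A8: "\<And>a b c. inf (imp a b) (imp b c) \<le> imp a c"
    and A6: "\<And>a. imp a a = top"
    by (auto simp: weak_heyting_algebra_def lat_le_def le_iff_inf)
  have one: "imp (inf a c) a = top" for a c :: 'a
  proof -
    have "top = imp a a" using A6 by simp
    also have "a = sup (inf a c) a" by (simp add: sup_absorb2)
    hence "imp a a = imp (sup (inf a c) a) a" by simp
    also have "\<dots> = inf (imp (inf a c) a) (imp a a)" using A5 by simp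
    finally show ?thesis using A6 by (simp add: top_unique)
  qed
  have nine: "imp a b \<le> imp (inf a c) (inf b c)" for a b c :: 'a
  proof -
    have "imp a b = inf (imp (inf a c) a) (imp a b)" using one by simp
    also have "\<dots> \<le> imp (inf a c) b" by (rule A8)
    also have "\<dots> = inf (imp (inf a c) b) (imp (inf a c) c)"
      using one[of c a] by (simp add: inf_commute)
    also have "\<dots> = imp (inf a c) (inf b c)" by (rule A4)
    finally show ?thesis .
  qed
  show "dlcmi inf sup inf imp top"
    unfolding dlcmi_def lat_le_def
  proof (intro conjI allI)
    show "distrib_lattice_ops (inf::'a\<Rightarrow>_) sup" by (rule dl_ok)
  next
    fix a b c :: 'a
    show "inf a top = a" by simp
    show "inf b top = b" by simp
    show "inf (inf a b) c = inf a (inf b c)" by (rule inf_assoc)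
    show "inf a b = inf b a" by (rule inf_commute)
    show "inf (imp a b) (imp a c) = imp a (inf b c)" by (rule A4)
    show "inf (imp a c) (imp b c) = imp (sup a b) c" by (rule A5)
    show "imp a a = top" by (rule A6)
    show "inf (sup a b) c = sup (inf a c) (inf b c)" by (rule inf_sup_distrib2)
    show "inf (inf (imp a b) (imp b c)) (imp a c) = inf (imp a b) (imp b c)"
      using A8[of a b c] by (rule inf_absorb1)
    show "inf (imp a b) (imp (inf a c) (inf b c)) = imp a b"
      using nine[of a b c] by (rule inf_absorb1)
  qed
next
  assume D: "dlcmi inf sup inf imp top"
  thus "weak_heyting_algebra inf sup imp bot top"
    unfolding dlcmi_def weak_heyting_algebra_def lat_le_def
    by auto
qed

end
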